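(* Let $n\ge3$ and let $W\subset\mathbb{C}^n$ be a real $3$-dimensional subspace. Given any unit vector $x\in\mathbb{C}^n$ and any unit vector $e\perp\mathrm{span}_{\mathbb{R}}\{x,Jx\}$, there exists $V\in\mathrm{SU}(n)\cdot W$ with $x,e\in V$.
   Context: $J$ denotes multiplication by $i$ on $\mathbb{C}^n=\mathbb{R}^{2n}$, with the standard real inner product. $\mathrm{SU}(n)\cdot W$ is the orbit of $W$ in the Grassmannian of real $3$-planes under the standard action of $\mathrm{SU}(n)$. *)

theory Defs
  imports "HOL-Analysis.Analysis"
begin

text \<open>C^n is modelled as complex^'n, viewed as a real inner product space
  (inner x y = sum of Re (x_k * cnj (y_k)), the standard real inner product on R^2n).\<close>

definition J :: "complex^'n \<Rightarrow> complex^'n" where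
  "J x = (\<chi> k. \<i> * x $ k)"

definition conj_transpose :: "complex^'n^'m \<Rightarrow> complex^'m^'n" where
  "conj_transpose A = (\<chi> i j. cnj (A $ j $ i))"

definition SU :: "(complex^'n^'n) set" where
  "SU = {U. conj_transpose U ** U = mat 1 \<and> det U = 1}"

definition SU_orbit :: "(complex^'n) set \<Rightarrow> (complex^'n) set set" where
  "SU_orbit W = {(\<lambda>v. U *v v) ` W | U. U \<in> SU}"

end

theory Submission
  imports Defs
begin



definition herm :: "complex^'n \<Rightarrow> complex^'n \<Rightarrow> complex" where
  "herm a b = (\<Sum>k\<in>UNIV. a$k * cnj (b$k))"

lemma inner_herm: "inner a b = Re (herm a b)"
  by (simp add: herm_def inner_vec_def inner_complex_def Re_sum)

lemma inner_i_aux: "inner (p::complex) (\<i>*q) = Im (p * cnj q)"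
  by (simp add: inner_complex_def algebra_simps)

lemma inner_J_herm: "inner a (J b) = Im (herm a b)"
  unfolding herm_def inner_vec_def J_def Im_sum by (simp add: inner_i_aux)

lemma herm_decomp: "herm a b = complex_of_real (inner a b) + \<i> * complex_of_real (inner a (J b))"
  using inner_J_herm[of a b] inner_herm[of a b] by (simp add: complex_eq_iff)

lemma herm_self: "herm a a = complex_of_real ((norm a)^2)"
proof -
  have "Im (herm a a) = 0" by (simp add: herm_def Im_sum)
  moreover have "Re (herm a a) = (norm a)^2" by (simp add: inner_herm[symmetric] power2_norm_eq_inner)
  ultimately show ?thesis by (simp add: complex_eq_iff)
qed

lemma part1:
  fixes W :: "(complex^'n) set"
  assumes "subspace W" "dim W = 3"
  shows "\<exists>w1\<in>W. \<exists>w2\<in>W. norm w1 = 1 \<and> norm w2 = 1 \<and> herm w2 w1 = 0"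
proof -
  have "\<not> W \<subseteq> {0}" using assms(2) dim_eq_0 by (metis zero_neq_numeral)
  then obtain w0 where w0: "w0 \<in> W" "w0 \<noteq> 0" by blast
  define w1 where "w1 = w0 /\<^sub>R norm w0"
  have w1: "w1 \<in> W" "norm w1 = 1" using w0 assms(1) by (auto simp: w1_def subspace_scale)
  define A where "A = span {w1, J w1}"
  define T where "T = {y \<in> UNIV. \<forall>x\<in>A. orthogonal x y}"
  have sA: "subspace A" by (simp add: A_def)
  have dT: "dim T + dim A = dim (UNIV :: (complex^'n) set)"
    unfolding T_def by (rule dim_subspace_orthogonal_to_vectors) (auto simp: sA)
  have dA: "dim A \<le> 2"
  proof -
    have "dim (span {w1, J w1}) \<le> card {w1, J w1}" by (rule dim_le_card) auto
    also have "\<dots> \<le> 2" by (simp add: card_insert_if)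
    finally show ?thesis by (simp add: A_def)
  qed
  have sT: "subspace T" unfolding T_def
    by (auto simp: subspace_def orthogonal_def inner_add_right)
  have "dim {x + y |x y. x \<in> W \<and> y \<in> T} + dim (W \<inter> T) = dim W + dim T"
    by (rule dim_sums_Int[OF assms(1) sT])
  moreover have "dim {x + y |x y. x \<in> W \<and> y \<in> T} \<le> dim (UNIV :: (complex^'n) set)"
    by (rule dim_subset) simp
  ultimately have "dim (W \<inter> T) > 0" using dT dA assms(2) by linarith
  then have "\<not> (W \<inter> T) \<subseteq> {0}" using dim_eq_0 by (metis less_irrefl)
  then obtain v where v: "v \<in> W" "v \<in> T" "v \<noteq> 0" by blast
  define w2 where "w2 = v /\<^sub>R norm v"
  have w2: "w2 \<in> W" "norm w2 = 1" using v assms(1) by (auto simp: w2_def subspace_scale)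
  have "w1 \<in> A" "J w1 \<in> A" by (auto simp: A_def span_base)
  then have "inner w1 v = 0" "inner (J w1) v = 0" using v(2) by (auto simp: T_def orthogonal_def)
  then have "inner w2 w1 = 0" "inner w2 (J w1) = 0" by (auto simp: w2_def inner_commute)
  then have "herm w2 w1 = 0" by (simp add: herm_decomp)
  with w1 w2 show ?thesis by blast
qed




definition unitary :: "complex^'n^'n \<Rightarrow> bool" where
  "unitary U \<longleftrightarrow> conj_transpose U ** U = mat 1"

lemma ct_mult: "conj_transpose (A ** B) = conj_transpose B ** conj_transpose (A::complex^'n^'n)"
  by (simp add: conj_transpose_def matrix_matrix_mult_def vec_eq_iff cnj_sum mult.commute)

lemma ct_ct: "conj_transpose (conj_transpose A) = (A::complex^'n^'n)"
  by (simp add: conj_transpose_def vec_eq_iff)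

lemma unitary_mult: "unitary A \<Longrightarrow> unitary B \<Longrightarrow> unitary (A ** B)"
  unfolding unitary_def ct_mult
  by (metis matrix_mul_assoc matrix_mul_lid)

lemma unitary_ct: "unitary A \<Longrightarrow> unitary (conj_transpose A)"
  unfolding unitary_def ct_ct by (simp add: matrix_left_right_inverse)

lemma herm_adj: "herm (A *v z) w = herm z (conj_transpose A *v w)"
proof -
  have "herm (A *v z) w = (\<Sum>k\<in>UNIV. \<Sum>l\<in>UNIV. A$k$l * z$l * cnj (w$k))"
    unfolding herm_def matrix_vector_mult_def by (simp add: sum_distrib_right)
  also have "\<dots> = (\<Sum>l\<in>UNIV. \<Sum>k\<in>UNIV. A$k$l * z$l * cnj (w$k))"
    by (rule sum.swap)
  also have "\<dots> = herm z (conj_transpose A *v w)"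
    unfolding herm_def matrix_vector_mult_def conj_transpose_def
    by (simp add: sum_distrib_left cnj_sum mult_ac)
  finally show ?thesis .
qed

lemma unitary_herm: "unitary U \<Longrightarrow> herm (U *v z) (U *v w) = herm z w"
  by (simp add: herm_adj unitary_def matrix_vector_mul_assoc)

lemma unitary_inv_apply: "unitary U \<Longrightarrow> U *v z = w \<Longrightarrow> conj_transpose U *v w = z"
  by (auto simp: unitary_def matrix_vector_mul_assoc)

lemma det_cnj: "det (\<chi> i j. cnj (A$i$j)) = cnj (det (A::complex^'n^'n))"
  by (simp add: det_def cnj_sum cnj_prod)

lemma det_ct: "det (conj_transpose A) = cnj (det (A::complex^'n^'n))"
proof -
  have "conj_transpose A = transpose (\<chi> i j. cnj (A$i$j))"
    by (simp add: conj_transpose_def transpose_def vec_eq_iff)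
  then show ?thesis by (simp add: det_cnj)
qed

lemma unitary_det: "unitary U \<Longrightarrow> cnj (det U) * det U = 1"
  by (metis det_I det_ct det_mul unitary_def)

definition diagm :: "('n \<Rightarrow> complex) \<Rightarrow> complex^'n^'n" where
  "diagm d = (\<chi> j k. if j = k then d j else 0)"

lemma diagm_apply: "diagm d *v z = (\<chi> j. d j * z$j)"
  unfolding diagm_def matrix_vector_mult_def
  by (simp add: vec_eq_iff if_distrib[of "\<lambda>x. x * _"] sum.delta cong: if_cong)

lemma det_diagm: "det (diagm d) = prod d UNIV"
  by (subst det_diagonal) (auto simp: diagm_def)

lemma unitary_diagm: "(\<And>j. cnj (d j) * d j = 1) \<Longrightarrow> unitary (diagm (d::'n::finite\<Rightarrow>complex))"
proof -
  assume h: "\<And>j. cnj (d j) * d j = 1"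
  have "(\<Sum>l\<in>UNIV. cnj (if l = j then d l else 0) * (if l = k then d l else 0)) = (if j = k then 1 else 0)" for j k
  proof -
    have "(\<Sum>l\<in>UNIV. cnj (if l = j then d l else 0) * (if l = k then d l else 0))
        = (\<Sum>l\<in>UNIV. if l = j then (if j = k then cnj (d j) * d j else 0) else 0)"
      by (rule sum.cong) auto
    also have "\<dots> = (if j = k then 1 else 0)" using h by simp
    finally show ?thesis .
  qed
  then show ?thesis
    unfolding unitary_def diagm_def conj_transpose_def matrix_matrix_mult_def mat_def
    by (simp add: vec_eq_iff)
qed




lemma herm_diff_left: "herm (a - b) c = herm a c - herm b c"
  by (simp add: herm_def algebra_simps sum_subtractf)
lemma herm_diff_right: "herm a (b - c) = herm a b - herm a c"
  by (simp add: herm_def algebra_simps sum_subtractf)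
lemma herm_smult_left: "herm (s *s a) b = s * herm a b"
  by (simp add: herm_def sum_distrib_left mult_ac)
lemma herm_smult_right: "herm a (s *s b) = cnj s * herm a b"
  by (simp add: herm_def sum_distrib_left mult_ac)
lemma herm_cnj: "herm b a = cnj (herm a b)"
  by (simp add: herm_def cnj_sum mult_ac)
lemma herm_axis_right: "herm z (axis i s) = z$i * cnj s"
  by (simp add: herm_def axis_def if_distrib[of cnj] if_distrib[of "\<lambda>x. _ * x"] cong: if_cong)
lemma herm_axis_left: "herm (axis i s) z = s * cnj (z$i)"
  by (simp add: herm_def axis_def if_distrib[of "\<lambda>x. x * _"] cong: if_cong)
lemma herm_zero: "herm u u = 0 \<Longrightarrow> u = 0"
  by (simp add: herm_self)
lemma herm_self_real: "cnj (herm u u) = herm u u"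
  by (simp add: herm_self)

definition hc :: "complex^'n \<Rightarrow> complex" where
  "hc u = complex_of_real (2 / (norm u)^2)"

definition hh :: "complex^'n \<Rightarrow> complex^'n^'n" where
  "hh u = (\<chi> j k. (if j = k then 1 else 0) - hc u * u$j * cnj (u$k))"

lemma hh_apply: "hh u *v z = z - (hc u * herm z u) *s u"
proof -
  have "(hh u *v z)$j = z$j - hc u * herm z u * u$j" for j
  proof -
    have "(hh u *v z)$j = (\<Sum>k\<in>UNIV. (if j = k then z$k else 0) - hc u * u$j * (cnj (u$k) * z$k))"
      unfolding hh_def matrix_vector_mult_def vec_lambda_beta by (intro sum.cong) (auto simp: algebra_simps)
    also have "\<dots> = z$j - hc u * u$j * herm z u"
      by (simp add: sum_subtractf sum_distrib_left[symmetric] herm_def mult_ac)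
    finally show ?thesis by (simp add: mult_ac)
  qed
  then show ?thesis by (simp add: vec_eq_iff)
qed

lemma hc_cnj: "cnj (hc u) = hc u"
  by (simp add: hc_def)

lemma hh_ct: "conj_transpose (hh u) = hh u"
  by (simp add: hh_def conj_transpose_def vec_eq_iff hc_cnj mult_ac)

lemma hc_herm: "u \<noteq> 0 \<Longrightarrow> hc u * herm u u = 2"
  by (simp add: hc_def herm_self)

lemma hh_invol: "hh u *v (hh u *v z) = z"
proof (cases "u = 0")
  case True
  then show ?thesis by (simp add: hh_apply)
next
  case False
  have e: "hc u * herm z u * herm u u = 2 * herm z u"
    using hc_herm[OF False] by (metis mult.commute mult.left_commute)
  have h: "herm (hh u *v z) u = - herm z u"
    unfolding hh_apply herm_diff_left herm_smult_left e by simp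
  have "hh u *v (hh u *v z) = (hh u *v z) - (hc u * (- herm z u)) *s u"
    by (subst hh_apply) (simp only: h)
  also have "\<dots> = z" by (simp add: hh_apply vec_eq_iff algebra_simps)
  finally show ?thesis .
qed

lemma hh_unitary: "unitary (hh u)"
proof -
  have "hh u ** hh u = mat 1"
    by (simp add: matrix_eq matrix_vector_mul_assoc[symmetric] hh_invol)
  then show ?thesis by (simp add: unitary_def hh_ct)
qed




lemma step1:
  fixes a :: "complex^'n"
  assumes a: "herm a a = 1"
  shows "\<exists>U. unitary U \<and> U *v a = axis i 1 \<and> (\<forall>z. herm z a = 0 \<longrightarrow> z$i = 0 \<longrightarrow> U *v z = z)"
proof -
  define \<phi> where "\<phi> = (if a$i = 0 then 1 else a$i / complex_of_real (cmod (a$i)))"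
  have \<phi>1: "cnj \<phi> * \<phi> = 1"
  proof (cases "a$i = 0")
    case False
    then have "cmod (a$i) \<noteq> 0" by simp
    then show ?thesis using False
      by (simp add: \<phi>_def complex_norm_square[symmetric] power2_eq_square field_simps mult_ac)
  qed (simp add: \<phi>_def)
  define r where "r = a$i * cnj \<phi>"
  have r: "r = complex_of_real (cmod (a$i))"
  proof (cases "a$i = 0")
    case False
    then have "cmod (a$i) \<noteq> 0" by simp
    then show ?thesis using False
      by (simp add: r_def \<phi>_def complex_norm_square[symmetric] power2_eq_square field_simps mult_ac)
  qed (simp add: r_def \<phi>_def)
  have rc: "cnj r = r" by (simp add: r)
  define b where "b = axis i \<phi>"
  have hab: "herm a b = r" by (simp add: b_def herm_axis_right r_def)
  have hba: "herm b a = r" using hab rc herm_cnj by metis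
  have hbb: "herm b b = 1" using \<phi>1 by (simp add: b_def herm_axis_right mult.commute)
  define u where "u = a - b"
  have hau: "herm a u = 1 - r" by (simp add: u_def herm_diff_right a hab)
  have huu: "herm u u = 2 - 2 * r"
    by (simp add: u_def herm_diff_right herm_diff_left a hab hba hbb)
  have Ha: "hh u *v a = b"
  proof (cases "u = 0")
    case True
    then show ?thesis by (simp add: hh_apply u_def)
  next
    case False
    have "hc u * (2 - 2 * r) = 2" using hc_herm[OF False] huu by simp
    then have "2 * (hc u * (1 - r)) = 2 * 1" by (simp add: algebra_simps)
    then have "hc u * (1 - r) = 1" by (metis mult_cancel_left zero_neq_numeral)
    then have "hc u * herm a u = 1" by (simp add: hau)
    then show ?thesis unfolding hh_apply by (simp add: u_def)
  qed
  define d where "d = (\<lambda>j. if j = i then cnj \<phi> else (1::complex))"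
  have Du: "unitary (diagm d)"
    by (rule unitary_diagm) (use \<phi>1 in \<open>auto simp: d_def mult.commute\<close>)
  have Db: "diagm d *v b = axis i 1"
    using \<phi>1 by (simp add: diagm_apply d_def b_def axis_def vec_eq_iff)
  define U where "U = diagm d ** hh u"
  have "unitary U" unfolding U_def by (rule unitary_mult[OF Du hh_unitary])
  moreover have "U *v a = axis i 1"
    by (simp add: U_def matrix_vector_mul_assoc[symmetric] Ha Db)
  moreover have "U *v z = z" if z: "herm z a = 0" "z$i = 0" for z
  proof -
    have "herm z b = 0" by (simp add: b_def herm_axis_right z)
    then have "herm z u = 0" by (simp add: u_def herm_diff_right z)
    then have "hh u *v z = z" by (simp add: hh_apply)
    moreover have "diagm d *v z = z" using z(2) by (simp add: diagm_apply d_def vec_eq_iff)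
    ultimately show ?thesis by (simp add: U_def matrix_vector_mul_assoc[symmetric])
  qed
  ultimately show ?thesis by blast
qed

lemma step2:
  fixes a b :: "complex^'n"
  assumes a: "herm a a = 1" and b: "herm b b = 1" and ba: "herm b a = 0" and ij: "i \<noteq> j"
  shows "\<exists>P. unitary P \<and> P *v a = axis i 1 \<and> P *v b = axis j 1"
proof -
  obtain P1 where P1: "unitary P1" "P1 *v a = axis i 1" using step1[OF a] by blast
  define b' where "b' = P1 *v b"
  have hb'b': "herm b' b' = 1" using unitary_herm[OF P1(1)] b by (simp add: b'_def)
  have "herm b' (axis i 1) = 0" using unitary_herm[OF P1(1), of b a] P1(2) ba by (simp add: b'_def)
  then have b'i: "b'$i = 0" by (simp add: herm_axis_right)
  obtain P2 where P2: "unitary P2" "P2 *v b' = axis j 1"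
    "\<forall>z. herm z b' = 0 \<longrightarrow> z$j = 0 \<longrightarrow> P2 *v z = z"
    using step1[OF hb'b'] by blast
  have "herm (axis i 1) b' = 0" by (simp add: herm_axis_left b'i)
  moreover have "(axis i (1::complex)) $ j = 0" using ij by (simp add: axis_def)
  ultimately have P2i: "P2 *v axis i 1 = axis i 1" using P2(3) by blast
  show ?thesis
    apply (rule exI[of _ "P2 ** P1"])
    using unitary_mult[OF P2(1) P1(1)] P1(2) P2(2) P2i
    by (simp add: matrix_vector_mul_assoc[symmetric] b'_def[symmetric])
qed




theorem lemma11p4:
  fixes W :: "(complex^'n) set" and x e :: "complex^'n"
  assumes "CARD('n) \<ge> 3"
    and "subspace W" and "dim W = 3"
    and "norm x = 1" and "norm e = 1"
    and "\<forall>v\<in>span {x, J x}. inner e v = 0"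
  shows "\<exists>V\<in>SU_orbit W. x \<in> V \<and> e \<in> V"
proof -
  have hx: "herm x x = 1" using assms(4) by (simp add: herm_self)
  have he: "herm e e = 1" using assms(5) by (simp add: herm_self)
  have "inner e x = 0" "inner e (J x) = 0" using assms(6) by (auto simp: span_base)
  then have hex: "herm e x = 0" by (simp add: herm_decomp)
  obtain w1 w2 where w: "w1 \<in> W" "w2 \<in> W" "norm w1 = 1" "norm w2 = 1" "herm w2 w1 = 0"
    using part1[OF assms(2,3)] by blast
  have hw1: "herm w1 w1 = 1" using w(3) by (simp add: herm_self)
  have hw2: "herm w2 w2 = 1" using w(4) by (simp add: herm_self)
  obtain i :: 'n where True by blast
  have "card (UNIV - {i}) \<ge> 2" using assms(1) by (simp add: card_Diff_singleton)
  then obtain j where j: "j \<in> UNIV - {i}"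
    by (metis all_not_in_conv card.empty not_numeral_le_zero)
  have "card (UNIV - {i, j}) \<ge> 1" using assms(1) j by (simp add: card_Diff_subset)
  then obtain k where k: "k \<in> UNIV - {i, j}"
    by (metis all_not_in_conv card.empty not_one_le_zero)
  have ij: "i \<noteq> j" using j by auto
  have ik: "i \<noteq> k" "j \<noteq> k" using k by auto
  obtain P where P: "unitary P" "P *v x = axis i 1" "P *v e = axis j 1"
    using step2[OF hx he hex ij] by blast
  obtain Q where Q: "unitary Q" "Q *v w1 = axis i 1" "Q *v w2 = axis j 1"
    using step2[OF hw1 hw2 w(5) ij] by blast
  define \<delta> where "\<delta> = det (conj_transpose P) * det Q"
  have \<delta>1: "cnj \<delta> * \<delta> = 1"
  proof -
    have "cnj \<delta> * \<delta> = (cnj (det P) * det P) * (cnj (det Q) * det Q)"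
      by (simp add: \<delta>_def det_ct mult_ac)
    then show ?thesis using unitary_det[OF P(1)] unitary_det[OF Q(1)] by simp
  qed
  define d where "d = (\<lambda>l. if l = k then cnj \<delta> else (1::complex))"
  have Du: "unitary (diagm d)"
    by (rule unitary_diagm) (use \<delta>1 in \<open>auto simp: d_def mult.commute\<close>)
  have dD: "det (diagm d) = cnj \<delta>"
  proof -
    have "prod d UNIV = d k * prod d (UNIV - {k})" by (simp add: prod.remove)
    also have "prod d (UNIV - {k}) = 1" by (rule prod.neutral) (simp add: d_def)
    finally show ?thesis by (simp add: det_diagm d_def)
  qed
  have Dax: "diagm d *v axis l 1 = axis l 1" if "l \<noteq> k" for l
    using that by (simp add: diagm_apply d_def axis_def vec_eq_iff)
  define U where "U = (conj_transpose P ** diagm d) ** Q"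
  have Uu: "unitary U" unfolding U_def
    by (intro unitary_mult unitary_ct P(1) Du Q(1))
  have "det U = \<delta> * cnj \<delta>" by (simp add: U_def det_mul dD \<delta>_def mult_ac)
  then have "det U = 1" using \<delta>1 by (simp add: mult.commute)
  with Uu have USU: "U \<in> SU" by (simp add: SU_def unitary_def)
  have Pix: "conj_transpose P *v axis i 1 = x" by (rule unitary_inv_apply[OF P(1,2)])
  have Pje: "conj_transpose P *v axis j 1 = e" by (rule unitary_inv_apply[OF P(1,3)])
  have "U *v w1 = x"
    by (simp add: U_def matrix_vector_mul_assoc[symmetric] Q(2) Dax ik Pix)
  moreover have "U *v w2 = e"
    by (simp add: U_def matrix_vector_mul_assoc[symmetric] Q(3) Dax ik Pje)
  ultimately have "x \<in> (\<lambda>v. U *v v) ` W" "e \<in> (\<lambda>v. U *v v) ` W" using w(1,2) by force+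
  moreover have "(\<lambda>v. U *v v) ` W \<in> SU_orbit W" using USU by (auto simp: SU_orbit_def)
  ultimately show ?thesis by blast
qed


end
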